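(* Let $H_n=\sum_{j=1}^n\frac1j$, let $\gamma$ be the Euler–Mascheroni constant, $z^{\overline{k}} = z(z+1) \cdots (z + k -1)$ the rising factorial, and $G$ the Barnes $G$-function. For $k \in \{1, 2, \ldots\}$ and $x > 0$, $$\sum_{n = 1}^\infty \left(H_n - \log\sqrt[k]{(n + x - 1)^{\overline{k}}} -\gamma + \frac{x-2}{n} + \frac{k}{2n} \right) = \gamma\left( x + \frac{k}{2} - 1\right) + \frac{1 -\log (2 \pi )}{2} + \frac{1}{k}\log\left[\frac{G(x+k)}{G(x)}\right].$$
   Context: The Barnes $G$-function is the entire function $G(z+1) = (2\pi)^{z/2} e^{-\frac{z+z^2(1+\gamma)}{2}} \prod_{m=1}^\infty \left(1+\frac{z}{m}\right)^m e^{-z+\frac{z^2}{2m}}$; it satisfies $G(1)=1$ and $G(z+1)=\Gamma(z)G(z)$. *)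

theory Defs
  imports "HOL-Analysis.Analysis"
begin

text \<open>Barnes G-function, defined (as in the paper) through its Weierstrass product
  G(z+1) = (2 pi)^(z/2) exp(-(z + z^2 (1+gamma))/2) prod_{m>=1} (1+z/m)^m exp(-z + z^2/(2m)).
  Here barnes_G w is G(w), i.e. the formula with z = w - 1.\<close>

definition barnes_G :: "complex \<Rightarrow> complex" where
  "barnes_G w = (let z = w - 1 in
     (complex_of_real (2 * pi)) powr (z / 2)
     * exp (- (z + z^2 * (1 + euler_mascheroni)) / 2)
     * (\<Prod>m. (1 + z / of_nat (Suc m)) ^ (Suc m) * exp (- z + z^2 / (2 * of_nat (Suc m)))))"

end

theory Submission
  imports Defs "HOL-Real_Asymp.Real_Asymp"
begin

definition lp :: "real \<Rightarrow> nat \<Rightarrow> real" where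
  "lp z n = real n * ln (1 + z / real n) - z + z^2 / (2 * real n)"

definition EG :: "real \<Rightarrow> real" where
  "EG w = (w - 1) / 2 * ln (2 * pi) - ((w - 1) + (w - 1)^2 * (1 + euler_mascheroni)) / 2
          + (\<Sum>m. lp (w - 1) (Suc m))"

lemma lp_bigo: "(\<lambda>n. lp z n) \<in> O(\<lambda>n. 1 / real n ^ 2)"
proof -
  have "(\<lambda>n::nat. real n * ln (1 + z / real n) - z + z*z / (2 * real n)) \<in> O(\<lambda>n. 1 / real n ^ 2)"
    by (real_asymp simp add: power2_eq_square)
  then show ?thesis by (simp add: lp_def power2_eq_square)
qed

lemma lp_summable: "summable (\<lambda>m. lp z (Suc m))"
proof -
  have "summable (\<lambda>n. inverse (of_nat n ^ 2 :: real))"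
    by (rule inverse_power_summable) simp
  then have "summable (\<lambda>n. norm (1 / real n ^ 2))"
    by (simp add: inverse_eq_divide)
  then have "summable (\<lambda>n. lp z n)"
    by (rule summable_comparison_test_bigo) (rule lp_bigo)
  then show ?thesis by (simp add: summable_Suc_iff)
qed

lemma factor_eq:
  assumes "z > -1"
  shows "(1 + complex_of_real z / of_nat (Suc m)) ^ (Suc m)
           * exp (- complex_of_real z + (complex_of_real z)^2 / (2 * of_nat (Suc m)))
         = exp (complex_of_real (lp z (Suc m)))"
proof -
  have pos: "1 + z / real (Suc m) > 0"
  proof -
    have "z / real (Suc m) > -1"
    proof (cases "z \<ge> 0")
      case True
      then have "z / real (Suc m) \<ge> 0" by simp
      then show ?thesis by linarith
    next
      case False
      then have "z * real (Suc m) \<le> z" by (simp add: algebra_simps mult_nonpos_nonneg)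
      then have "z / real (Suc m) \<ge> z" by (simp add: le_divide_eq)
      then show ?thesis using assms by linarith
    qed
    then show ?thesis by linarith
  qed
  have r: "(1 + z / real (Suc m)) ^ (Suc m) * exp (- z + z^2 / (2 * real (Suc m)))
          = exp (lp z (Suc m))"
  proof -
    have "(1 + z / real (Suc m)) ^ (Suc m) = exp (real (Suc m) * ln (1 + z / real (Suc m)))"
    proof -
      have "exp (real (Suc m) * ln (1 + z / real (Suc m))) = exp (ln (1 + z / real (Suc m))) ^ Suc m"
        by (rule exp_of_nat_mult)
      then show ?thesis using pos by simp
    qed
    moreover have "exp (lp z (Suc m)) = exp (real (Suc m) * ln (1 + z / real (Suc m))) * exp (- z + z^2 / (2 * real (Suc m)))"
      unfolding lp_def by (simp only: exp_add[symmetric]) (simp add: algebra_simps)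
    ultimately show ?thesis by simp
  qed
  have "(1 + complex_of_real z / of_nat (Suc m)) ^ (Suc m)
           * exp (- complex_of_real z + (complex_of_real z)^2 / (2 * of_nat (Suc m)))
        = complex_of_real ((1 + z / real (Suc m)) ^ (Suc m) * exp (- z + z^2 / (2 * real (Suc m))))"
    by (simp add: of_real_exp)
  also have "\<dots> = exp (complex_of_real (lp z (Suc m)))"
    by (simp only: r of_real_exp)
  finally show ?thesis .
qed

lemma G_real:
  assumes "w > 0"
  shows "barnes_G (complex_of_real w) = complex_of_real (exp (EG w))"
proof -
  define z where "z = w - 1"
  have z: "z > -1" using assms by (simp add: z_def)
  have zc: "complex_of_real w - 1 = complex_of_real z" by (simp add: z_def)
  have prod: "(\<Prod>m. (1 + complex_of_real z / of_nat (Suc m)) ^ (Suc m)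
           * exp (- complex_of_real z + (complex_of_real z)^2 / (2 * of_nat (Suc m))))
        = complex_of_real (exp (\<Sum>m. lp z (Suc m)))"
  proof -
    have "(\<Prod>m. (1 + complex_of_real z / of_nat (Suc m)) ^ (Suc m)
           * exp (- complex_of_real z + (complex_of_real z)^2 / (2 * of_nat (Suc m))))
          = (\<Prod>m. exp (complex_of_real (lp z (Suc m))))"
      by (simp only: factor_eq[OF z])
    also have "\<dots> = exp (\<Sum>m. complex_of_real (lp z (Suc m)))"
      by (rule prodinf_exp) (simp add: lp_summable)
    also have "(\<Sum>m. complex_of_real (lp z (Suc m))) = complex_of_real (\<Sum>m. lp z (Suc m))"
      by (rule suminf_of_real[symmetric]) (rule lp_summable)
    finally show ?thesis by (simp add: of_real_exp)
  qed
  have pw: "(complex_of_real (2 * pi)) powr (complex_of_real z / 2)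
           = complex_of_real (exp (z / 2 * ln (2 * pi)))"
  proof -
    have "(complex_of_real (2 * pi)) powr (complex_of_real z / 2)
          = (complex_of_real (2 * pi)) powr (complex_of_real (z / 2))" by simp
    also have "\<dots> = complex_of_real ((2 * pi) powr (z / 2))"
      by (rule powr_of_real) simp
    also have "(2 * pi) powr (z / 2) = exp (z / 2 * ln (2 * pi))"
      by (simp add: powr_def)
    finally show ?thesis .
  qed
  have ex: "exp (- (complex_of_real z + (complex_of_real z)^2 * (1 + euler_mascheroni)) / 2)
        = complex_of_real (exp (- (z + z^2 * (1 + euler_mascheroni)) / 2))"
    by (simp add: of_real_exp)
  show ?thesis
    unfolding barnes_G_def Let_def zc pw ex prod
    apply (simp add: EG_def z_def exp_add[symmetric] flip: of_real_mult)
    apply (simp add: field_simps)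
    done
qed

lemma harm_asymp:
  "(\<lambda>M. real M * (harm M - euler_mascheroni - ln (real M))) \<longlonglongrightarrow> 1/2"
proof -
  have lo: "\<forall>\<^sub>F M in sequentially. - 1/2 \<le> real M * (harm M - ln (real (Suc M)) - euler_mascheroni)"
    using eventually_ge_at_top[of "1::nat"]
  proof eventually_elim
    case (elim M)
    have "euler_mascheroni \<le> harm M - ln (real (Suc M)) + inverse (real (2*M))"
      using euler_mascheroni_bounds[OF elim] by simp
    then have "- inverse (real (2*M)) \<le> harm M - ln (real (Suc M)) - euler_mascheroni" by linarith
    then have "real M * (- inverse (real (2*M))) \<le> real M * (harm M - ln (real (Suc M)) - euler_mascheroni)"
      by (rule mult_left_mono) simp
    moreover have "real M * (- inverse (real (2*M))) = - 1/2" using elim by (simp add: field_simps)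
    ultimately show ?case by simp
  qed
  have hi: "\<forall>\<^sub>F M in sequentially. real M * (harm M - ln (real (Suc M)) - euler_mascheroni) \<le> - (real M / (2 * (real M + 1)))"
    using eventually_ge_at_top[of "1::nat"]
  proof eventually_elim
    case (elim M)
    have "euler_mascheroni \<ge> harm M - ln (real (Suc M)) + inverse (real (2*(M+1)))"
      using euler_mascheroni_bounds[OF elim] by simp
    then have "harm M - ln (real (Suc M)) - euler_mascheroni \<le> - inverse (real (2*(M+1)))" by linarith
    then have "real M * (harm M - ln (real (Suc M)) - euler_mascheroni) \<le> real M * (- inverse (real (2*(M+1))))"
      by (rule mult_left_mono) simp
    moreover have "real M * (- inverse (real (2*(M+1)))) = - (real M / (2 * (real M + 1)))"
      by (simp add: field_simps)
    ultimately show ?case by simp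
  qed
  have l1: "(\<lambda>M::nat. - 1/2 :: real) \<longlonglongrightarrow> - 1/2" by simp
  have l2: "(\<lambda>M::nat. - (real M / (2 * (real M + 1)))) \<longlonglongrightarrow> - 1/2" by real_asymp
  have A: "(\<lambda>M. real M * (harm M - ln (real (Suc M)) - euler_mascheroni)) \<longlonglongrightarrow> - 1/2"
    by (rule tendsto_sandwich[OF lo hi l1 l2])
  have B: "(\<lambda>M::nat. real M * (ln (real M + 1) - ln (real M))) \<longlonglongrightarrow> 1" by real_asymp
  have "(\<lambda>M. real M * (harm M - ln (real (Suc M)) - euler_mascheroni) + real M * (ln (real M + 1) - ln (real M)))
          \<longlonglongrightarrow> - 1/2 + 1"
    by (rule tendsto_add[OF A B])
  moreover have "(\<lambda>M. real M * (harm M - ln (real (Suc M)) - euler_mascheroni) + real M * (ln (real M + 1) - ln (real M)))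
     = (\<lambda>M. real M * (harm M - euler_mascheroni - ln (real M)))"
    by (rule ext) (simp add: algebra_simps)
  ultimately show ?thesis by simp
qed

lemma sum_real_lessThan: "(\<Sum>j<k. real j) = real k * (real k - 1) / 2"
  by (induction k) (simp_all add: field_simps)

lemma lnpoch_asymp:
  assumes "x > 0" "k \<ge> 1"
  shows "(\<lambda>M. real M * (ln (pochhammer (real M + x) k) / real k - ln (real M)))
           \<longlonglongrightarrow> x + (real k - 1) / 2"
proof -
  have each: "(\<lambda>M::nat. real M * (ln (real M + (x + real j)) - ln (real M))) \<longlonglongrightarrow> x + real j" for j
    by real_asymp
  have "(\<lambda>M. (\<Sum>j<k. real M * (ln (real M + (x + real j)) - ln (real M))) / real k)
          \<longlonglongrightarrow> (\<Sum>j<k. x + real j) / real k"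
    using assms by (intro tendsto_divide tendsto_sum each) auto
  moreover have "(\<Sum>j<k. x + real j) / real k = x + (real k - 1) / 2"
    using assms by (simp add: sum.distrib sum_real_lessThan field_simps)
  moreover have "(\<lambda>M. (\<Sum>j<k. real M * (ln (real M + (x + real j)) - ln (real M))) / real k)
        = (\<lambda>M. real M * (ln (pochhammer (real M + x) k) / real k - ln (real M)))"
  proof (rule ext)
    fix M :: nat
    have "ln (pochhammer (real M + x) k) = (\<Sum>j<k. ln (real M + x + real j))"
      unfolding pochhammer_prod using assms
      by (subst ln_prod) (auto simp: atLeast0LessThan add_pos_nonneg)
    then show "(\<Sum>j<k. real M * (ln (real M + (x + real j)) - ln (real M))) / real k
        = real M * (ln (pochhammer (real M + x) k) / real k - ln (real M))"
      using assms by (simp add: sum_subtractf sum_distrib_left[symmetric] field_simps add.assoc)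
  qed
  ultimately show ?thesis by simp
qed

lemma poch_shift:
  assumes "y > 0"
  shows "ln (pochhammer (y + 1) k) = ln (pochhammer y k) + ln (y + real k) - ln y"
proof -
  have "y * pochhammer (y + 1) k = (y + real k) * pochhammer y k"
    using pochhammer_rec[of y k] pochhammer_rec'[of y k] by simp
  then have "ln (y * pochhammer (y + 1) k) = ln ((y + real k) * pochhammer y k)" by simp
  moreover have "pochhammer (y + 1) k > 0" "pochhammer y k > 0"
    using assms by (simp_all add: pochhammer_pos)
  ultimately show ?thesis using assms by (simp add: ln_mult)
qed

theorem mainTheorem12:
  fixes k :: nat and x :: real
  assumes "k \<ge> 1" and "x > 0"
  shows "(\<lambda>m. let n = Suc m in
            harm n - ln (root k (pochhammer (real n + x - 1) k)) - euler_mascheroni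
            + (x - 2) / real n + real k / (2 * real n))
         sums (euler_mascheroni * (x + real k / 2 - 1) + (1 - ln (2 * pi)) / 2
               + (1 / real k) * Re (Ln (barnes_G (complex_of_real (x + real k))
                                        / barnes_G (complex_of_real x))))"
proof -
  define a where "a = x + real k - 1"
  define b where "b = x - 1"
  define c where "c = x + real k / 2 - 1"
  define F where "F = (\<lambda>m. let n = Suc m in
            harm n - ln (root k (pochhammer (real n + x - 1) k)) - euler_mascheroni
            + (x - 2) / real n + real k / (2 * real n))"
  define g where "g = (\<lambda>i. (lp a (Suc i) - lp b (Suc i)) / real k)"
  define Q where "Q = (\<lambda>M::nat. ln (pochhammer (real M + x) k))"
  define D where "D = (\<lambda>M. real M * (harm M - euler_mascheroni - Q M / real k))"
  have kpos: "real k > 0" using assms by simp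
  have step: "F M = g M + D (Suc M) - D M" for M
  proof -
    define n where "n = real (Suc M)"
    have npos: "n > 0" by (simp add: n_def)
    have Fm: "F M = harm M + 1 / n - Q M / real k - euler_mascheroni + (x - 2) / n + real k / (2 * n)"
      unfolding F_def Q_def n_def Let_def using assms
      by (simp add: harm_Suc ln_root inverse_eq_divide add.commute add.left_commute)
    have QS: "Q (Suc M) = Q M + ln (real M + x + real k) - ln (real M + x)"
      unfolding Q_def using poch_shift[of "real M + x" k] assms
      by (simp add: add_ac)
    have la: "ln (1 + a / n) = ln (real M + x + real k) - ln n"
    proof -
      have "1 + a / n = (real M + x + real k) / n" using npos by (simp add: a_def n_def field_simps)
      then show ?thesis using npos assms by (simp add: ln_div)
    qed
    have lb: "ln (1 + b / n) = ln (real M + x) - ln n"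
    proof -
      have "1 + b / n = (real M + x) / n" using npos by (simp add: b_def n_def field_simps)
      then show ?thesis using npos assms by (simp add: ln_div)
    qed
    have gm: "g M = (n * (Q (Suc M) - Q M) - real k + (a^2 - b^2) / (2 * n)) / real k"
    proof -
      have d: "ln (1 + a / n) - ln (1 + b / n) = Q (Suc M) - Q M" using la lb QS by simp
      have ab: "a - b = real k" by (simp add: a_def b_def)
      have "lp a (Suc M) - lp b (Suc M) = n * (ln (1 + a / n) - ln (1 + b / n)) - (a - b) + (a^2 - b^2) / (2 * n)"
        unfolding lp_def n_def[symmetric] by (simp add: algebra_simps diff_divide_distrib)
      then show ?thesis unfolding g_def d ab by simp
    qed
    have DS: "D (Suc M) = n * (harm M + 1 / n - euler_mascheroni - Q (Suc M) / real k)"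
      unfolding D_def n_def by (simp add: harm_Suc inverse_eq_divide)
    have DM: "D M = (n - 1) * (harm M - euler_mascheroni - Q M / real k)"
      unfolding D_def n_def by simp
    show ?thesis
      unfolding Fm gm DS DM using npos kpos
      by (simp add: a_def b_def field_simps power2_eq_square)
  qed
  have partial: "(\<Sum>i<M. F i) = (\<Sum>i<M. g i) + D M" for M
    by (induction M) (simp_all add: D_def step)
  have summ_g: "summable g"
    unfolding g_def by (intro summable_divide summable_diff lp_summable)
  have Dlim: "D \<longlonglongrightarrow> 1/2 - (x + (real k - 1) / 2)"
  proof -
    have "(\<lambda>M. real M * (harm M - euler_mascheroni - ln (real M))
             - real M * (ln (pochhammer (real M + x) k) / real k - ln (real M)))
           \<longlonglongrightarrow> 1/2 - (x + (real k - 1) / 2)"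
      by (rule tendsto_diff[OF harm_asymp lnpoch_asymp[OF assms(2,1)]])
    moreover have "(\<lambda>M. real M * (harm M - euler_mascheroni - ln (real M))
             - real M * (ln (pochhammer (real M + x) k) / real k - ln (real M))) = D"
      by (rule ext) (simp add: D_def Q_def algebra_simps)
    ultimately show ?thesis by simp
  qed
  have Fs: "F sums (suminf g + (1/2 - (x + (real k - 1) / 2)))"
    unfolding sums_def partial
    by (rule tendsto_add[OF summable_LIMSEQ[OF summ_g] Dlim])
  have sg: "suminf g = ((\<Sum>m. lp a (Suc m)) - (\<Sum>m. lp b (Suc m))) / real k"
    unfolding g_def by (simp add: suminf_divide suminf_diff summable_diff lp_summable)
  have ReEq: "Re (Ln (barnes_G (complex_of_real (x + real k)) / barnes_G (complex_of_real x)))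
        = EG (x + real k) - EG x"
  proof -
    have "barnes_G (complex_of_real (x + real k)) / barnes_G (complex_of_real x)
          = complex_of_real (exp (EG (x + real k) - EG x))"
    proof -
      have g1: "barnes_G (complex_of_real (x + real k)) = complex_of_real (exp (EG (x + real k)))"
        using assms by (intro G_real) simp
      have g2: "barnes_G (complex_of_real x) = complex_of_real (exp (EG x))"
        using assms by (intro G_real) simp
      show ?thesis unfolding g1 g2 by (simp add: exp_diff)
    qed
    then show ?thesis by (simp add: Ln_of_real)
  qed
  have R: "euler_mascheroni * (x + real k / 2 - 1) + (1 - ln (2 * pi)) / 2
               + (1 / real k) * (EG (x + real k) - EG x) = suminf g + (1/2 - (x + (real k - 1) / 2))"
    unfolding EG_def sg a_def b_def using kpos
    by (simp add: field_simps power2_eq_square)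
  show ?thesis
    unfolding F_def[symmetric] ReEq R by (rule Fs)
qed

end
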